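(* Let $Y\sim N(\theta,\sigma^2)$ with $\sigma>0$, let $\tau\ge1$, and let $\theta_0=E_0[(Y^2-\sigma^2)\mathbb 1(Y^2\le\sigma^2\tau)]$, where $E_0$ denotes expectation under $\theta=0$. Then $$\big|E[(Y^2-\sigma^2)\mathbb 1(Y^2\le\sigma^2\tau)]-\theta_0\big|\le\min\{\theta^2,3\sigma^2\tau\}.$$ *)

theory Defs
  imports "HOL-Probability.Probability"
begin

text \<open>E_theta[(Y^2 - sigma^2) 1(Y^2 <= sigma^2 tau)] for Y ~ N(theta, sigma^2),
  written as the Lebesgue integral against the normal density
  (normal_density mu sigma takes the standard deviation sigma).\<close>
definition trunc_moment :: "real \<Rightarrow> real \<Rightarrow> real \<Rightarrow> real" where
  "trunc_moment \<theta> \<sigma> \<tau> =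
     (LINT y|lborel. normal_density \<theta> \<sigma> y *
        ((y\<^sup>2 - \<sigma>\<^sup>2) * indicator {y. y\<^sup>2 \<le> \<sigma>\<^sup>2 * \<tau>} y))"

end

theory Submission imports Defs begin

definition phi :: "real \<Rightarrow> real" where "phi x = exp (-(x^2)/2) / sqrt (2*pi)"

lemma nd1: "normal_density \<theta> 1 y = phi (y - \<theta>)"
  by (simp add: normal_density_def phi_def)

lemma phi_pos: "phi x > 0" by (simp add: phi_def)

lemma phi_deriv: "(phi has_real_derivative (- x * phi x)) (at x)"
proof -
  have "((\<lambda>x. exp (-(x^2)/2) / sqrt (2*pi)) has_real_derivative (exp (-(x^2)/2) * (- (2 * x) / 2)) / sqrt (2*pi)) (at x)"
    by (intro DERIV_cdivide) (rule derivative_eq_intros refl | simp)+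
  then show ?thesis unfolding phi_def by (simp add: ac_simps)
qed

lemma sinh_conv:
  fixes a t :: real
  assumes "0 \<le> t" "t \<le> 1" "0 \<le> a"
  shows "exp (a*t) - exp (-(a*t)) \<le> t * (exp a - exp (-a))"
proof -
  have cv: "convex_on {0..} (\<lambda>x::real. exp x - exp (-x))"
  proof (rule f''_ge0_imp_convex[where f'="\<lambda>x. exp x + exp (-x)" and f''="\<lambda>x. exp x - exp (-x)"])
    show "convex {0::real..}" by simp
    show "DERIV (\<lambda>x. exp x - exp (-x)) x :> exp x + exp (-x)" for x::real
      by (rule derivative_eq_intros refl | simp)+
    show "DERIV (\<lambda>x. exp x + exp (-x)) x :> exp x - exp (-x)" for x::real
      by (rule derivative_eq_intros refl | simp)+
    show "0 \<le> exp x - exp (-x)" if "x \<in> {0::real..}" for x using that by simp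
  qed
  have "(\<lambda>x::real. exp x - exp (-x)) ((1 - t) *\<^sub>R 0 + t *\<^sub>R a) \<le> (1 - t) * ((\<lambda>x::real. exp x - exp (-x)) 0) + t * ((\<lambda>x::real. exp x - exp (-x)) a)"
    by (rule convex_onD[OF cv]) (use assms in auto)
  then show ?thesis by (simp add: mult.commute)
qed

lemma poly_aux: "(1::real) \<le> a \<Longrightarrow> 0 \<le> A - 24/5*a + 144/25 \<Longrightarrow> 1 + A \<le> (343/100) * (1 + (A - 2*a + 1)/2)"
  by (simp add: field_simps)

lemma key:
  assumes a: "1 \<le> a" and t: "0 \<le> t" "t \<le> 1"
  shows "(1 + a^2 - t^2) * (phi (a - t) - phi (a + t)) \<le> 2 * t * (1 + phi 1)"
proof -
  define s where "s = sqrt (2*pi)"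
  define E where "E = exp (1/2::real)"
  have s: "s \<ge> 2.505" unfolding s_def
    using pi_approx by (intro real_le_rsqrt) (simp add: power2_eq_square)
  have E1: "E \<ge> 1.5" unfolding E_def using exp_ge_add_one_self[of "1/2::real"] by simp
  have E2: "E^2 = exp 1" unfolding E_def by (simp add: power2_eq_square flip: exp_add)
  have e: "exp (1::real) \<le> 2.7183" using e_approx_32 by (simp add: abs_if split: if_splits)
  have phi1: "phi 1 = 1 / (E * s)" unfolding phi_def E_def s_def
    by (simp add: exp_minus field_simps)
  have diff: "phi (a - t) - phi (a + t) = exp (-(a^2+t^2)/2) * (exp (a*t) - exp (-(a*t))) / s"
    unfolding phi_def s_def
    by (simp add: field_simps power2_eq_square flip: exp_add) 
  have d0: "exp (a*t) - exp (-(a*t)) \<ge> 0" using a t by simp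
  have dpos: "phi (a - t) - phi (a + t) \<ge> 0" using d0 diff s by simp
  have "(1 + a^2 - t^2) * (phi (a - t) - phi (a + t)) \<le> (1 + a^2) * (phi (a - t) - phi (a + t))"
    using dpos by (intro mult_right_mono) auto
  also have "\<dots> \<le> (1 + a^2) * (exp (-(a^2)/2) * (t * exp a) / s)"
  proof -
    have "exp (-(a^2+t^2)/2) \<le> exp (-(a^2)/2)" by simp
    moreover have "exp (a*t) - exp (-(a*t)) \<le> t * exp a"
      using order_trans[OF sinh_conv[OF t, of a] mult_left_mono[of "exp a - exp (-a)" "exp a" t]] a t by simp
    ultimately have "exp (-(a^2+t^2)/2) * (exp (a*t) - exp (-(a*t))) \<le> exp (-(a^2)/2) * (t * exp a)"
      using d0 by (intro mult_mono) auto
    then show ?thesis unfolding diff using s by (intro mult_left_mono divide_right_mono) auto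
  qed
  also have "\<dots> = t / s * ((1 + a^2) * (E * exp (-((a-1)^2)/2)))"
    unfolding E_def by (simp add: field_simps power2_eq_square flip: exp_add)
  also have "\<dots> \<le> t / s * ((343/100) * E)"
  proof -
    have q: "exp (-((a-1)^2)/2) * (1 + (a-1)^2/2) \<le> 1"
    proof -
      have "1 + (a-1)^2/2 \<le> exp ((a-1)^2/2)" by (rule exp_ge_add_one_self)
      then have "exp (-((a-1)^2)/2) * (1 + (a-1)^2/2) \<le> exp (-((a-1)^2)/2) * exp ((a-1)^2/2)"
        by (intro mult_left_mono) auto
      also have "\<dots> = 1" by (simp flip: exp_add)
      finally show ?thesis .
    qed
    have p: "1 + a^2 \<le> (343/100) * (1 + (a-1)^2/2)"
    proof -
      have h: "0 \<le> (a - 12/5)^2" by simp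
      have e1: "(a - 12/5)^2 = a*a - 24/5*a + 144/25" by (simp add: power2_eq_square algebra_simps)
      have e2: "(a - 1)^2 = a*a - 2*a + 1" by (simp add: power2_eq_square algebra_simps)
      have e3: "a^2 = a*a" by (simp add: power2_eq_square)
      have "1 + a*a \<le> (343/100) * (1 + (a*a - 2*a + 1)/2)" using poly_aux[OF a, of "a*a"] h e1 by simp
      then show ?thesis using e2 e3 by simp
    qed
    have "(1 + a^2) * exp (-((a-1)^2)/2) \<le> (343/100) * (1 + (a-1)^2/2) * exp (-((a-1)^2)/2)"
      using p by (intro mult_right_mono) auto
    also have "\<dots> = (343/100) * (exp (-((a-1)^2)/2) * (1 + (a-1)^2/2))" by (simp add: ac_simps)
    also have "\<dots> \<le> (343/100) * 1" by (rule mult_left_mono[OF q]) simp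
    finally have "(1 + a^2) * exp (-((a-1)^2)/2) \<le> (343/100)" by simp
    then have "(1 + a^2) * (E * exp (-((a-1)^2)/2)) \<le> (343/100) * E"
      using E1 by (simp add: mult.left_commute)  
    then show ?thesis using s t by (intro mult_left_mono) auto
  qed
  also have "\<dots> \<le> 2 * t * (1 + phi 1)"
  proof -
    have "(343/100) * E * E \<le> 2 * s * E + 2"
    proof -
      have "(343/100) * E * E \<le> 9.3238" using E2 e by (simp add: power2_eq_square)
      also have "\<dots> \<le> 2 * 2.505 * 1.5 + 2" by simp
      also have "\<dots> \<le> 2 * s * E + 2" using s E1 by (intro add_right_mono mult_mono) auto
      finally show ?thesis .
    qed
    then have "(343/100) * E \<le> 2 * s + 2 / E" using E1 by (simp add: field_simps)
    then have "t / s * ((343/100) * E) \<le> t / s * (2 * s + 2 / E)" using s t by (intro mult_left_mono) auto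
    also have "\<dots> = 2 * t * (1 + phi 1)" unfolding phi1 using s E1 by (simp add: field_simps)
    finally show ?thesis .
  qed
  finally show ?thesis .
qed


lemma phi_chain[derivative_intros]:
  "(f has_real_derivative f') (at x within S) \<Longrightarrow>
   ((\<lambda>x. phi (f x)) has_real_derivative (- f x * phi (f x) * f')) (at x within S)"
  using DERIV_chain'[OF _ phi_deriv] by simp

lemma phi_cont_on[continuous_intros]: "continuous_on S f \<Longrightarrow> continuous_on S (\<lambda>x. phi (f x))"
  unfolding phi_def by (intro continuous_intros) auto

lemma phi_isCont: "isCont phi x"
  using phi_deriv DERIV_isCont by blast

lemma phi_even: "phi (-x) = phi x" by (simp add: phi_def)

lemma phi_mono: "x^2 \<le> y^2 \<Longrightarrow> phi y \<le> phi x"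
  unfolding phi_def by (intro divide_right_mono) auto

lemma phi_le_half: "phi x \<le> 1/2"
proof -
  have "sqrt (2*pi) \<ge> 2" using pi_ge_two by (intro real_le_rsqrt) (simp add: power2_eq_square)
  moreover have "exp (-(x^2)/2) \<le> 1" by simp
  ultimately show ?thesis unfolding phi_def by (intro frac_le) auto
qed

definition Pr :: "real \<Rightarrow> real \<Rightarrow> real" where
  "Pr a \<theta> = (LINT y|lborel. indicator {-a..a} y * phi (y - \<theta>))"

definition TT :: "real \<Rightarrow> real \<Rightarrow> real" where
  "TT a \<theta> = (LINT y|lborel. indicator {-a..a} y * (phi (y - \<theta>) * (y^2 - 1)))"

definition hh :: "real \<Rightarrow> real \<Rightarrow> real" where
  "hh a \<theta> = (a + \<theta>) * phi (a - \<theta>) + (a - \<theta>) * phi (a + \<theta>) - 2 * a * phi a"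

lemma intg: fixes c d :: real shows "(\<And>x. isCont g x) \<Longrightarrow> integrable lborel (\<lambda>x. indicator {c..d} x * (g x :: real))"
  using borel_integrable_atLeastAtMost[of c d g] by (simp add: mult.commute)

lemma intg_phi: "integrable lborel (\<lambda>y. phi (y - \<theta>))"
proof -
  have "(\<lambda>y. phi (y-\<theta>)) = normal_density \<theta> 1" by (rule ext) (simp add: nd1)
  then show ?thesis using integrable_normal_density[of \<theta> 1] by simp
qed

lemma int_phi: "(LINT y|lborel. phi (y - \<theta>)) = 1"
proof -
  have "(\<lambda>y. phi (y-\<theta>)) = normal_density \<theta> 1" by (rule ext) (simp add: nd1)
  then show ?thesis using integral_normal_density[of \<theta> 1] by simp
qed

lemma TT_closed:
  assumes "0 \<le> a"
  shows "TT a \<theta> = \<theta>^2 * Pr a \<theta> - (a+\<theta>)*phi(a-\<theta>) - (a-\<theta>)*phi(a+\<theta>)"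
proof -
  have F: "(LINT y|lborel. indicator {-a..a} y *\<^sub>R (phi (y-\<theta>) * (y^2 - 1 - \<theta>^2)))
        = (\<lambda>y. -(y+\<theta>)*phi(y-\<theta>)) a - (\<lambda>y. -(y+\<theta>)*phi(y-\<theta>)) (-a)"
  proof (rule integral_FTC_atLeastAtMost)
    show "-a \<le> a" using assms by simp
    fix x
    show "((\<lambda>y. -(y+\<theta>)*phi(y-\<theta>)) has_vector_derivative (phi (x-\<theta>) * (x^2 - 1 - \<theta>^2))) (at x within {-a..a})"
      unfolding has_real_derivative_iff_has_vector_derivative[symmetric]
      by (auto intro!: derivative_eq_intros simp: algebra_simps power2_eq_square)
  next
    show "continuous_on {-a..a} (\<lambda>x. phi (x-\<theta>) * (x^2 - 1 - \<theta>^2))"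
      by (intro continuous_intros)
  qed
  have e: "(\<lambda>y. indicator {-a..a} y * (phi (y - \<theta>) * (y^2 - 1))) =
      (\<lambda>y. indicator {-a..a} y * (phi (y-\<theta>) * (y^2 - 1 - \<theta>^2)) + \<theta>^2 * (indicator {-a..a} y * phi (y - \<theta>)))"
    by (auto simp: algebra_simps)
  have i1: "integrable lborel (\<lambda>y. indicator {-a..a} y * (phi (y-\<theta>) * (y^2 - 1 - \<theta>^2)))"
    by (intro intg) (intro continuous_intros phi_isCont isCont_o2[OF _ phi_isCont] | simp)+
  have i2: "integrable lborel (\<lambda>y. \<theta>^2 * (indicator {-a..a} y * phi (y - \<theta>)))"
    by (intro integrable_mult_right intg) (intro continuous_intros isCont_o2[OF _ phi_isCont] | simp)+
  have "TT a \<theta> = (LINT y|lborel. indicator {-a..a} y * (phi (y-\<theta>) * (y^2 - 1 - \<theta>^2))) + \<theta>^2 * Pr a \<theta>"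
    unfolding TT_def Pr_def e by (subst Bochner_Integration.integral_add[OF i1 i2]) simp
  also have "\<dots> = \<theta>^2 * Pr a \<theta> - (a+\<theta>)*phi(a-\<theta>) - (a-\<theta>)*phi(a+\<theta>)"
  proof -
    have F': "(LINT y|lborel. indicator {-a..a} y * (phi (y-\<theta>) * (y^2 - 1 - \<theta>^2))) = -(a+\<theta>)*phi(a-\<theta>) + (-a+\<theta>)*phi(-a-\<theta>)"
      using F by (simp add: algebra_simps)
    have ph: "phi(-a-\<theta>) = phi(a+\<theta>)" using phi_even[of "a+\<theta>"] by simp
    show ?thesis unfolding F' ph by (simp add: algebra_simps)
  qed
  finally show ?thesis .
qed


lemma intg_ind_phi: "integrable lborel (\<lambda>y. indicator {c..d} y * phi (y - \<theta>))"
  by (intro intg) (intro continuous_intros isCont_o2[OF _ phi_isCont] | simp)+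

lemma intg_ind_TT: "integrable lborel (\<lambda>y. indicator {c..d} y * (phi (y - \<theta>) * (y^2 - 1)))"
  by (intro intg) (intro continuous_intros isCont_o2[OF _ phi_isCont] | simp)+

lemma Pr_le1: "Pr a \<theta> \<le> 1"
proof -
  have "Pr a \<theta> \<le> (LINT y|lborel. phi (y - \<theta>))"
    unfolding Pr_def
    by (rule integral_mono[OF intg_ind_phi intg_phi])
       (auto simp: indicator_def less_imp_le[OF phi_pos])
  then show ?thesis using int_phi by simp
qed

lemma Pr_nonneg: "0 \<le> Pr a \<theta>"
  unfolding Pr_def by (rule Bochner_Integration.integral_nonneg) (auto simp: less_imp_le[OF phi_pos])

lemma TT_ge: "- Pr a \<theta> \<le> TT a \<theta>"
proof -
  have "(LINT y|lborel. - (indicator {-a..a} y * phi (y - \<theta>))) \<le> TT a \<theta>"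
    unfolding TT_def
    by (rule integral_mono[OF integrable_minus[OF intg_ind_phi] intg_ind_TT])
       (auto simp: indicator_def less_imp_le[OF phi_pos] algebra_simps)
  then show ?thesis unfolding Pr_def by simp
qed

lemma TT_le: "TT a \<theta> \<le> (a^2 - 1) * Pr a \<theta>"
proof -
  have "TT a \<theta> \<le> (LINT y|lborel. (a^2 - 1) * (indicator {-a..a} y * phi (y - \<theta>)))"
    unfolding TT_def
  proof (rule integral_mono[OF intg_ind_TT integrable_mult_right[OF intg_ind_phi]])
    fix y
    show "indicator {-a..a} y * (phi (y - \<theta>) * (y^2 - 1)) \<le> (a^2 - 1) * (indicator {- a..a} y * phi (y - \<theta>))"
    proof (cases "y \<in> {-a..a}")
      case True
      then have "\<bar>y\<bar> \<le> \<bar>a\<bar>" by auto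
      then have "y^2 \<le> a^2" by (simp add: abs_le_square_iff)
      then show ?thesis using True phi_pos[of "y-\<theta>"] by (simp add: mult_left_mono mult.commute)
    qed simp
  qed
  then show ?thesis unfolding Pr_def by simp
qed

lemma Pr_lower:
  assumes a: "1 \<le> a" and t: "\<bar>\<theta>\<bar> \<le> 1"
  shows "phi 1 \<le> Pr a \<theta>"
proof -
  define c where "c = (if \<theta> \<ge> 0 then \<theta> - 1 else \<theta>)"
  have sub: "y \<in> {-a..a} \<and> (y - \<theta>)^2 \<le> 1^2" if y: "y \<in> {c..c+1}" for y
  proof -
    have 1: "y \<in> {-a..a}" "\<bar>y - \<theta>\<bar> \<le> \<bar>1\<bar>" using a t y unfolding c_def by (auto split: if_splits)
    then show ?thesis using abs_le_square_iff[of "y-\<theta>" 1] by simp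
  qed
  have "(LINT y|lborel. indicator {c..c+1} y *\<^sub>R phi 1) = (\<lambda>x. phi 1 * x) (c+1) - (\<lambda>x. phi 1 * x) c"
    by (rule integral_FTC_atLeastAtMost)
       (auto intro!: derivative_eq_intros simp: has_real_derivative_iff_has_vector_derivative[symmetric])
  then have e: "(LINT y|lborel. indicator {c..c+1} y * phi 1) = phi 1" by (simp add: algebra_simps)
  have "(LINT y|lborel. indicator {c..c+1} y * phi 1) \<le> Pr a \<theta>"
    unfolding Pr_def
  proof (rule integral_mono[OF _ intg_ind_phi])
    show "integrable lborel (\<lambda>y. indicator {c..c+1} y * phi 1)"
      by (intro intg) simp
    fix y
    show "indicator {c..c+1} y * phi 1 \<le> indicator {-a..a} y * phi (y - \<theta>)"
    proof (cases "y \<in> {c..c+1}")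
      case True
      with sub[OF True] phi_mono[of "y-\<theta>" 1] show ?thesis by simp
    next
      case False then show ?thesis by (simp add: less_imp_le[OF phi_pos])
    qed
  qed
  then show ?thesis using e by simp
qed

definition Psi :: "real \<Rightarrow> real \<Rightarrow> real" where
  "Psi R x = integral {-R..x} phi"

lemma Psi_deriv:
  assumes "-R < x" "x < R"
  shows "(Psi R has_real_derivative phi x) (at x)"
proof -
  have c: "continuous_on {-R..R} phi" using phi_isCont continuous_at_imp_continuous_on by blast
  have "((\<lambda>x. integral {-R..x} phi) has_real_derivative phi x) (at x within {-R..R})"
    by (rule integral_has_real_derivative[OF c]) (use assms in auto)
  then show ?thesis using assms unfolding Psi_def by (simp add: at_within_Icc_at)
qed

lemma Pr_Psi:
  assumes a: "0 \<le> a" and R: "a + \<bar>\<theta>\<bar> < R"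
  shows "Pr a \<theta> = Psi R (a - \<theta>) - Psi R (-a - \<theta>)"
proof -
  have "(LINT y|lborel. indicator {-a..a} y *\<^sub>R phi (y - \<theta>)) = (\<lambda>y. Psi R (y - \<theta>)) a - (\<lambda>y. Psi R (y - \<theta>)) (-a)"
  proof (rule integral_FTC_atLeastAtMost)
    show "-a \<le> a" using a by simp
    fix x assume x: "-a \<le> x" "x \<le> a"
    have d: "(Psi R has_real_derivative phi (x - \<theta>)) (at (x - \<theta>))"
      by (rule Psi_deriv) (use x R in auto)
    have "((\<lambda>y. Psi R (y - \<theta>)) has_real_derivative phi (x - \<theta>) * 1) (at x)"
      by (rule DERIV_chain2[where g="\<lambda>y. y - \<theta>", OF d]) (auto intro!: derivative_eq_intros)
    then show "((\<lambda>y. Psi R (y - \<theta>)) has_vector_derivative phi (x - \<theta>)) (at x within {-a..a})"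
      by (simp add: has_real_derivative_iff_has_vector_derivative[symmetric] has_field_derivative_at_within)
  next
    show "continuous_on {-a..a} (\<lambda>x. phi (x - \<theta>))" by (intro continuous_intros)
  qed
  then show ?thesis unfolding Pr_def by simp
qed

lemma hh_deriv: "(hh a has_real_derivative (1 + a^2 - x^2) * (phi (a - x) - phi (a + x))) (at x)"
proof -
  have "((\<lambda>x. (a + x) * phi (a - x) + (a - x) * phi (a + x) - 2 * a * phi a) has_real_derivative
          (1 + a^2 - x^2) * (phi (a - x) - phi (a + x))) (at x)"
    by (auto intro!: derivative_eq_intros simp: algebra_simps power2_eq_square)
  then show ?thesis by (simp add: hh_def[abs_def])
qed


lemma phi_diff_sign:
  assumes "0 \<le> a" "0 \<le> x" shows "phi (a + x) \<le> phi (a - x)"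
  by (rule phi_mono) (use assms in \<open>simp add: power2_eq_square algebra_simps\<close>)

lemma upper:
  assumes a: "0 \<le> a"
  shows "\<theta>^2 * Pr a \<theta> - hh a \<theta> \<le> \<theta>^2"
proof -
  define R where "R = a + \<bar>\<theta>\<bar> + 1"
  define Q where "Q x = Psi R (a - x) - Psi R (-a - x)" for x
  have PQ: "Pr a x = Q x" if "\<bar>x\<bar> \<le> \<bar>\<theta>\<bar>" for x
    unfolding Q_def by (rule Pr_Psi[OF a]) (use that in \<open>simp add: R_def\<close>)
  have dQ: "(Q has_real_derivative (phi (a + x) - phi (a - x))) (at x)" if x: "\<bar>x\<bar> \<le> \<bar>\<theta>\<bar>" for x
  proof -
    have d1: "(Psi R has_real_derivative phi (a - x)) (at (a - x))"
      by (rule Psi_deriv) (use x a in \<open>auto simp: R_def\<close>)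
    have d2: "(Psi R has_real_derivative phi (-a - x)) (at (-a - x))"
      by (rule Psi_deriv) (use x a in \<open>auto simp: R_def\<close>)
    have e1: "((\<lambda>y. Psi R (a - y)) has_real_derivative phi (a - x) * (-1)) (at x)"
      by (rule DERIV_chain2[where g="\<lambda>y. a - y", OF d1]) (auto intro!: derivative_eq_intros)
    have e2: "((\<lambda>y. Psi R (-a - y)) has_real_derivative phi (-a - x) * (-1)) (at x)"
      by (rule DERIV_chain2[where g="\<lambda>y. -a - y", OF d2]) (auto intro!: derivative_eq_intros)
    have ph: "phi(-a-x) = phi(a+x)" using phi_even[of "a+x"] by simp
    show ?thesis using DERIV_diff[OF e1 e2] unfolding Q_def[abs_def] ph by simp
  qed
  define K where "K x = x^2 * (1 - Q x) + hh a x" for x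
  have dK: "(K has_real_derivative (2*x*(1 - Q x) + (1 + a^2) * (phi (a - x) - phi (a + x)))) (at x)"
    if x: "\<bar>x\<bar> \<le> \<bar>\<theta>\<bar>" for x
  proof -
    have "((\<lambda>x. x^2 * (1 - Q x) + hh a x) has_real_derivative
       (2 * x * (1 - Q x) + x^2 * (0 - (phi (a + x) - phi (a - x))) + (1 + a^2 - x^2) * (phi (a - x) - phi (a + x)))) (at x)"
      apply (rule derivative_eq_intros dQ[OF x] hh_deriv refl)+
      apply (simp_all add: algebra_simps)
      done
    then show ?thesis unfolding K_def[abs_def] by (simp add: algebra_simps)
  qed
  have K0: "K 0 = 0" unfolding K_def hh_def by simp
  have "0 \<le> K \<theta>"
  proof (cases "0 \<le> \<theta>")
    case True
    have "K 0 \<le> K \<theta>"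
    proof (rule DERIV_nonneg_imp_nondecreasing[OF True])
      fix x assume x: "0 \<le> x" "x \<le> \<theta>"
      then have xb: "\<bar>x\<bar> \<le> \<bar>\<theta>\<bar>" by simp
      have "0 \<le> 1 - Q x" using Pr_le1[of a x] PQ[OF xb] by simp
      moreover have "0 \<le> phi (a - x) - phi (a + x)" using phi_diff_sign[OF a x(1)] by simp
      ultimately have "0 \<le> 2*x*(1 - Q x) + (1 + a^2) * (phi (a - x) - phi (a + x))"
        using x by (intro add_nonneg_nonneg mult_nonneg_nonneg) auto
      then show "\<exists>y. DERIV K x :> y \<and> 0 \<le> y" using dK[OF xb] by blast
    qed
    then show ?thesis using K0 by simp
  next
    case False
    have "K \<theta> \<ge> K 0"
    proof (rule DERIV_nonpos_imp_nonincreasing[of \<theta> 0 K])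
      show "\<theta> \<le> 0" using False by simp
      fix x assume x: "\<theta> \<le> x" "x \<le> 0"
      then have xb: "\<bar>x\<bar> \<le> \<bar>\<theta>\<bar>" by simp
      have "0 \<le> 1 - Q x" using Pr_le1[of a x] PQ[OF xb] by simp
      then have "2*x*(1 - Q x) \<le> 0" using x by (simp add: mult_nonpos_nonneg)
      moreover have "phi (a - x) \<le> phi (a + x)" using phi_diff_sign[OF a, of "-x"] x by simp
      then have "(1 + a^2) * (phi (a - x) - phi (a + x)) \<le> 0"
        by (intro mult_nonneg_nonpos) auto
      ultimately have "2*x*(1 - Q x) + (1 + a^2) * (phi (a - x) - phi (a + x)) \<le> 0" by simp
      then show "\<exists>y. DERIV K x :> y \<and> y \<le> 0" using dK[OF xb] by blast
    qed
    then show ?thesis using K0 by simp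
  qed
  then show ?thesis unfolding K_def using PQ[of \<theta>] by (simp add: algebra_simps)
qed

lemma lower:
  assumes a: "1 \<le> a" and t: "\<bar>\<theta>\<bar> \<le> 1"
  shows "hh a \<theta> \<le> (1 + phi 1) * \<theta>^2"
proof -
  define H where "H x = (1 + phi 1) * x^2 - hh a x" for x
  have dH: "(H has_real_derivative (2 * (1 + phi 1) * x - (1 + a^2 - x^2) * (phi (a - x) - phi (a + x)))) (at x)" for x
  proof -
    have "((\<lambda>x. (1 + phi 1) * x^2 - hh a x) has_real_derivative
      ((1 + phi 1) * (2 * x) - (1 + a^2 - x^2) * (phi (a - x) - phi (a + x)))) (at x)"
      apply (rule derivative_eq_intros hh_deriv refl)+
      apply (simp_all add: algebra_simps)
      done
    then show ?thesis unfolding H_def[abs_def] by (simp add: algebra_simps)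
  qed
  have H0: "H 0 = 0" unfolding H_def hh_def by simp
  have "0 \<le> H \<theta>"
  proof (cases "0 \<le> \<theta>")
    case True
    have "H 0 \<le> H \<theta>"
    proof (rule DERIV_nonneg_imp_nondecreasing[OF True])
      fix x assume x: "0 \<le> x" "x \<le> \<theta>"
      have "(1 + a^2 - x^2) * (phi (a - x) - phi (a + x)) \<le> 2 * x * (1 + phi 1)"
        by (rule key) (use a x t in auto)
      then show "\<exists>y. DERIV H x :> y \<and> 0 \<le> y" using dH[of x] by (intro exI[of _ _]) (auto simp: algebra_simps)
    qed
    then show ?thesis using H0 by simp
  next
    case False
    have "H \<theta> \<ge> H 0"
    proof (rule DERIV_nonpos_imp_nonincreasing[of \<theta> 0 H])
      show "\<theta> \<le> 0" using False by simp
      fix x assume x: "\<theta> \<le> x" "x \<le> 0"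
      have "(1 + a^2 - (-x)^2) * (phi (a - (-x)) - phi (a + (-x))) \<le> 2 * (-x) * (1 + phi 1)"
        by (rule key) (use a x t in auto)
      then show "\<exists>y. DERIV H x :> y \<and> y \<le> 0" using dH[of x] by (intro exI[of _ _]) (auto simp: algebra_simps)
    qed
    then show ?thesis using H0 by simp
  qed
  then show ?thesis unfolding H_def by simp
qed


lemma L1:
  assumes "0 \<le> \<tau>"
  shows "trunc_moment \<theta> 1 \<tau> = TT (sqrt \<tau>) \<theta>"
proof -
  have set: "{y. y^2 \<le> 1^2 * \<tau>} = {-sqrt \<tau>..sqrt \<tau>}"
  proof (intro set_eqI)
    fix y :: real
    have "y^2 \<le> \<tau> \<longleftrightarrow> sqrt (y^2) \<le> sqrt \<tau>" by (simp only: real_sqrt_le_iff)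
    also have "\<dots> \<longleftrightarrow> \<bar>y\<bar> \<le> sqrt \<tau>" by simp
    also have "\<dots> \<longleftrightarrow> y \<in> {-sqrt \<tau>..sqrt \<tau>}" by (auto simp: abs_le_iff)
    finally show "y \<in> {y. y^2 \<le> 1^2 * \<tau>} \<longleftrightarrow> y \<in> {-sqrt \<tau>..sqrt \<tau>}" by simp
  qed
  show ?thesis unfolding trunc_moment_def TT_def set
    by (rule Bochner_Integration.integral_cong[OF refl]) (simp add: nd1)
qed

lemma main1:
  assumes t: "1 \<le> \<tau>"
  shows "\<bar>trunc_moment \<theta> 1 \<tau> - trunc_moment 0 1 \<tau>\<bar> \<le> min (\<theta>^2) (3 * \<tau>)"
proof -
  define a where "a = sqrt \<tau>"
  have a1: "1 \<le> a" unfolding a_def using t by simp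
  have a2: "a^2 = \<tau>" unfolding a_def using t by simp
  have a0: "0 \<le> a" using a1 by simp
  have T0: "TT a 0 = - 2 * a * phi a" using TT_closed[OF a0, of 0] by simp
  have D: "trunc_moment \<theta> 1 \<tau> - trunc_moment 0 1 \<tau> = TT a \<theta> - TT a 0"
    using L1[of \<tau>] t unfolding a_def by simp
  have D2: "TT a \<theta> - TT a 0 = \<theta>^2 * Pr a \<theta> - hh a \<theta>"
    unfolding TT_closed[OF a0, of \<theta>] T0 hh_def by (simp add: algebra_simps)
  have up: "TT a \<theta> - TT a 0 \<le> \<theta>^2" using upper[OF a0, of \<theta>] D2 by simp
  have phia: "0 \<le> phi a" "phi a \<le> 1/2" using phi_pos[of a] phi_le_half[of a] by auto
  have pp: "0 \<le> 2 * a * phi a" using phia a0 by simp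
  have lo1: "TT a \<theta> - TT a 0 \<ge> -1"
    using TT_ge[of a \<theta>] Pr_le1[of a \<theta>] T0 pp by linarith
  have lo: "- (\<theta>^2) \<le> TT a \<theta> - TT a 0"
  proof (cases "\<bar>\<theta>\<bar> \<le> 1")
    case True
    have "hh a \<theta> \<le> (1 + phi 1) * \<theta>^2" by (rule lower[OF a1 True])
    moreover have "phi 1 * \<theta>^2 \<le> Pr a \<theta> * \<theta>^2" using Pr_lower[OF a1 True] by (intro mult_right_mono) auto
    ultimately show ?thesis using D2 by (simp add: algebra_simps)
  next
    case False
    then have "1 \<le> \<theta>^2" using abs_le_square_iff[of 1 \<theta>] by simp
    then show ?thesis using lo1 by simp
  qed
  have up3: "TT a \<theta> - TT a 0 \<le> 3 * \<tau>"
  proof -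
    have "TT a \<theta> \<le> (a^2 - 1) * Pr a \<theta>" by (rule TT_le)
    also have "\<dots> \<le> (a^2 - 1) * 1" using Pr_le1[of a \<theta>] a1
      by (intro mult_left_mono) (auto simp: power2_eq_square intro: order_trans[OF _ mult_mono[of 1 a 1 a]])
    finally have "TT a \<theta> \<le> a^2 - 1" by simp
    moreover have "- TT a 0 \<le> a" using T0 phia a0 by (simp add: mult_left_mono[of "phi a" "1/2" "2*a", simplified])
    moreover have "a \<le> a^2" using a1 by (simp add: power2_eq_square)
    ultimately show ?thesis using a2 t by simp
  qed
  have lo3: "- (3 * \<tau>) \<le> TT a \<theta> - TT a 0" using lo1 t by simp
  show ?thesis unfolding D using up lo up3 lo3 by (simp add: abs_le_iff)
qed


lemma scale:
  assumes s: "\<sigma> > 0"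
  shows "trunc_moment \<theta> \<sigma> \<tau> = \<sigma>^2 * trunc_moment (\<theta>/\<sigma>) 1 \<tau>"
proof -
  define F where "F y = normal_density \<theta> \<sigma> y * ((y\<^sup>2 - \<sigma>\<^sup>2) * indicator {y. y\<^sup>2 \<le> \<sigma>\<^sup>2 * \<tau>} y)" for y
  define G where "G x = normal_density (\<theta>/\<sigma>) 1 x * ((x\<^sup>2 - 1\<^sup>2) * indicator {y. y\<^sup>2 \<le> 1\<^sup>2 * \<tau>} x)" for x
  have n: "normal_density \<theta> \<sigma> (\<sigma>*x) = normal_density (\<theta>/\<sigma>) 1 x / \<sigma>" for x
  proof -
    have d: "x - \<theta>/\<sigma> = (\<sigma>*x - \<theta>) / \<sigma>" using s by (simp add: field_simps)
    have e: "(\<sigma>*x - \<theta>)^2 / \<sigma>^2 = (x - \<theta>/\<sigma>)^2"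
      unfolding d power_divide using s by simp
    have sq: "sqrt (2*pi*\<sigma>^2) = sqrt (2*pi) * \<sigma>" using s by (simp add: real_sqrt_mult)
    show ?thesis unfolding normal_density_def sq using s e by simp
  qed
  have ind: "indicator {y. y\<^sup>2 \<le> \<sigma>\<^sup>2 * \<tau>} (\<sigma>*x) = (indicator {y. y\<^sup>2 \<le> 1\<^sup>2 * \<tau>} x :: real)" for x
  proof -
    have "(\<sigma>*x)^2 \<le> \<sigma>^2 * \<tau> \<longleftrightarrow> x^2 \<le> \<tau>" using s by (simp add: power_mult_distrib)
    then show ?thesis by (simp add: indicator_def)
  qed
  have pw0: "F (\<sigma> * x) = \<sigma> * G x" for x
    unfolding F_def G_def n ind using s by (simp add: power_mult_distrib field_simps power2_eq_square)
  have "trunc_moment \<theta> \<sigma> \<tau> = (LINT y|lborel. F y)" unfolding trunc_moment_def F_def by simp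
  also have "\<dots> = \<bar>\<sigma>\<bar> *\<^sub>R (LINT x|lborel. F (0 + \<sigma> * x))"
    by (rule lborel_integral_real_affine) (use s in simp)
  also have "\<dots> = \<sigma> * (LINT x|lborel. \<sigma> * G x)" using s by (simp add: pw0)
  also have "\<dots> = \<sigma>^2 * (LINT x|lborel. G x)" by (simp add: power2_eq_square)
  also have "\<dots> = \<sigma>^2 * trunc_moment (\<theta>/\<sigma>) 1 \<tau>" unfolding trunc_moment_def G_def by simp
  finally show ?thesis .
qed

theorem lemma6:
  fixes \<theta> \<sigma> \<tau> \<theta>\<^sub>0 :: real
  assumes "\<sigma> > 0" and "\<tau> \<ge> 1"
    and "\<theta>\<^sub>0 = trunc_moment 0 \<sigma> \<tau>"
  shows "\<bar>trunc_moment \<theta> \<sigma> \<tau> - \<theta>\<^sub>0\<bar> \<le> min (\<theta>\<^sup>2) (3 * \<sigma>\<^sup>2 * \<tau>)"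
proof -
  have m: "\<bar>trunc_moment (\<theta>/\<sigma>) 1 \<tau> - trunc_moment 0 1 \<tau>\<bar> \<le> min ((\<theta>/\<sigma>)^2) (3 * \<tau>)"
    by (rule main1) (use assms in simp)
  have "\<bar>trunc_moment \<theta> \<sigma> \<tau> - \<theta>\<^sub>0\<bar> = \<sigma>^2 * \<bar>trunc_moment (\<theta>/\<sigma>) 1 \<tau> - trunc_moment 0 1 \<tau>\<bar>"
    using assms scale[of \<sigma> \<theta> \<tau>] scale[of \<sigma> 0 \<tau>] by (simp add: abs_mult right_diff_distrib[symmetric])
  also have "\<dots> \<le> \<sigma>^2 * min ((\<theta>/\<sigma>)^2) (3 * \<tau>)" using m by (intro mult_left_mono) auto
  also have "\<dots> = min (\<theta>\<^sup>2) (3 * \<sigma>\<^sup>2 * \<tau>)"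
    using assms by (simp add: min_def power_divide field_simps)
  finally show ?thesis .
qed

end
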